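(* Let $N\ge1$ be an integer, let $f_1,f_2:\mathbb{Z}_N\to\mathbb{R}_{\ge0}$ and let $K_0\ge1$, $\delta>0$, $\varepsilon>0$. Then there exist $\eta=\eta(K_0,\delta,\varepsilon)>0$ and $\Omega\subset\mathbb{Z}_N$ with $1\in\Omega$ and $|\Omega|$ bounded by a constant depending only on $K_0,\delta,\varepsilon$, such that the following holds. Suppose $\chi=\chi_{\Omega,\eta}:\mathbb{Z}\to\mathbb{R}_{\ge0}$ is a function satisfying: $0\le\chi(n)\le c(|\Omega|)$ for a constant depending only on $|\Omega|$; $\chi(n)=\chi(-n)$ and $\chi(n+N)=\chi(n)$; $\chi(n)\ge1$ for $n\in B(\Omega,\eta)$; $\chi(n)\le(\eta^2/8)^{|\Omega|}$ for $n\notin B(\Omega,2\eta)$; and $\|\chi\|_1:=\frac1N\sum_{n\in\mathbb{Z}_N}\chi(n)\ge(\eta/2)^{|\Omega|}$. Assume (i) $f_2*\chi(t)\ge\delta\|\chi\|_1$ for all integers $t\in(\frac N3,\frac{2N}3)$; (ii) $\sum_{N/3<n<N/2}f_1(n)\ge\delta N$; (iii) $\sum_{\xi\in\mathbb{Z}_N}|\widehat{f_j}(\xi)|^r\le K_0$ for $j\in\{1,2\}$ and $r\in\{3,4\}$. Then $f_1*f_2(n)\ge\frac{\delta^2}{3}$ for all but at most $\varepsilon N$ values of $n\in[0.9N,N]$.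
   Context: For $\Omega\subset\mathbb{Z}_N$ and $\eta\in(0,\frac12)$, the Bohr set is $B(\Omega,\eta)=\{n\in\mathbb{Z}_N:\|\xi n/N\|\le\eta\ \forall\xi\in\Omega\}$, $\|\cdot\|$ the distance to the nearest integer. For $f,g:\mathbb{Z}_N\to\mathbb{C}$: $\hat f(\xi)=\frac1N\sum_{n\in\mathbb{Z}_N}f(n)e(-\xi n/N)$ and $f*g(n)=\frac1N\sum_{k\in\mathbb{Z}_N}f(k)g(n-k)$, with $e(t)=e^{2\pi it}$; $\chi$ is regarded as a function on $\mathbb{Z}_N$ by periodicity, and integers are identified with their residues mod $N$. *)

theory Defs
  imports "HOL-Analysis.Analysis"
begin

text \<open>Z_N is represented by the residues {0..<N} (as integers); functions on Z_N are
 functions int => _ of which only the values on {0..<N} matter; arguments are reduced mod N.\<close>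

definition dist_int :: "real \<Rightarrow> real" where
  "dist_int t = \<bar>t - of_int (round t)\<bar>"

definition bohr :: "nat \<Rightarrow> int set \<Rightarrow> real \<Rightarrow> int set" where
  "bohr N \<Omega> \<eta> = {n \<in> {0..<int N}. \<forall>\<xi>\<in>\<Omega>. dist_int (of_int \<xi> * of_int n / real N) \<le> \<eta>}"

definition fourier :: "nat \<Rightarrow> (int \<Rightarrow> real) \<Rightarrow> int \<Rightarrow> complex" where
  "fourier N f \<xi> = (1 / of_nat N) *
     (\<Sum>n\<in>{0..<int N}. of_real (f n) * cis (- 2 * pi * of_int \<xi> * of_int n / real N))"

definition conv :: "nat \<Rightarrow> (int \<Rightarrow> real) \<Rightarrow> (int \<Rightarrow> real) \<Rightarrow> int \<Rightarrow> real" where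
  "conv N f g n = (1 / real N) * (\<Sum>k\<in>{0..<int N}. f k * g ((n - k) mod int N))"

definition norm1 :: "nat \<Rightarrow> (int \<Rightarrow> real) \<Rightarrow> real" where
  "norm1 N chi = (1 / real N) * (\<Sum>n\<in>{0..<int N}. chi n)"

end

theory Submission
  imports Defs
begin

lemma norm_1_minus_cis: "norm (1 - cis t) \<le> \<bar>t\<bar>"
proof -
  have "(norm (1 - cis t))^2 = (1 - cos t)^2 + (sin t)^2"
    by (simp add: cmod_def)
  also have "\<dots> = 2 - 2 * cos t"
    by (simp add: power2_eq_square algebra_simps)
  also have "\<dots> = 4 * (sin (t/2))^2"
    using cos_double_sin[of "t/2"] by simp
  also have "\<dots> \<le> 4 * (t/2)^2"
    using abs_sin_x_le_abs_x[of "t/2"] by (simp add: abs_le_square_iff del: abs_divide)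
  also have "\<dots> = \<bar>t\<bar>^2" by (simp add: power2_eq_square)
  finally have "(norm (1 - cis t))^2 \<le> \<bar>t\<bar>^2" .
  then show ?thesis by (rule power2_le_imp_le) simp
qed

definition ee :: "nat \<Rightarrow> int \<Rightarrow> complex" where
  "ee N a = cis (2 * pi * of_int a / real N)"

lemma ee_add: "ee N (a + b) = ee N a * ee N b"
  by (simp add: ee_def cis_mult add_divide_distrib distrib_left)

lemma ee_0[simp]: "ee N 0 = 1" by (simp add: ee_def)

lemma ee_neg: "ee N (- a) = cnj (ee N a)"
  by (simp add: ee_def cis_cnj)

lemma norm_ee[simp]: "norm (ee N a) = 1" by (simp add: ee_def)

lemma ee_mult_N: assumes "N \<ge> 1" shows "ee N (int N * q) = 1"
proof -
  have "2 * pi * of_int (int N * q) / real N = 2 * pi * of_int q" using assms by simp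
  then show ?thesis unfolding ee_def by simp
qed

lemma ee_mod: assumes "N \<ge> 1" shows "ee N (a mod int N) = ee N a"
proof -
  have "a = a mod int N + int N * (a div int N)" by simp
  then have "ee N a = ee N (a mod int N) * ee N (int N * (a div int N))"
    by (metis ee_add)
  then show ?thesis using ee_mult_N[OF assms] by simp
qed

lemma ee_cong: assumes "N \<ge> 1" "a mod int N = b mod int N" shows "ee N a = ee N b"
  by (metis assms ee_mod)

lemma ee_pow: "ee N (int k * m) = (ee N m) ^ k"
  by (induction k) (auto simp: distrib_right ee_add)

lemma sum_int_range: "(\<Sum>x\<in>{0..<int N}. g x) = (\<Sum>i<N. g (int i))"
proof -
  have "{0..<int N} = int ` {..<N}" by (simp add: image_int_atLeastLessThan lessThan_atLeast0)
  then show ?thesis by (simp add: sum.reindex)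
qed

lemma ee_ne_1: assumes "N \<ge> 1" "m mod int N \<noteq> 0" shows "ee N m \<noteq> 1"
proof
  assume h: "ee N m = 1"
  define r where "r = m mod int N"
  have r0: "0 \<le> r" "r < int N" using assms(1) unfolding r_def by auto
  have r: "0 < r" "r < int N" using r0 assms(2) unfolding r_def by auto
  have "ee N r = 1" using h ee_mod[OF assms(1)] r_def by simp
  then have "Re (cis (2 * pi * of_int r / real N)) = 1" unfolding ee_def by simp
  then have "cos (2 * pi * of_int r / real N) = 1" by simp
  then obtain n::int where n: "2 * pi * of_int r / real N = of_int n * 2 * pi"
    unfolding cos_one_2pi_int by blast
  have Npos: "real N > 0" using assms(1) by simp
  have "2 * pi * of_int r = of_int n * 2 * pi * real N" using n Npos by (simp add: field_simps)
  then have "of_int r = of_int n * real N" using pi_gt_zero by simp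
  then have "of_int r / real N = n" using Npos by (simp add: field_simps)
  moreover have "0 < of_int r / real N" "of_int r / real N < 1" using r assms by auto
  ultimately have "0 < real_of_int n" "real_of_int n < 1" by auto
  then have "0 < n" "n < 1" by simp_all
  then show False by simp
qed

lemma orth: assumes "N \<ge> 1"
  shows "(\<Sum>\<xi>\<in>{0..<int N}. ee N (\<xi> * m)) = (if m mod int N = 0 then of_nat N else 0)"
proof (cases "m mod int N = 0")
  case True
  have "ee N (\<xi> * m) = 1" for \<xi>
  proof -
    have "int N dvd m" using True by (simp add: dvd_eq_mod_eq_0)
    then have "int N dvd \<xi> * m" by simp
    then have "(\<xi> * m) mod int N = 0 mod int N" by simp
    then have "ee N (\<xi> * m) = ee N 0" by (rule ee_cong[OF assms])
    then show ?thesis by simp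
  qed
  then show ?thesis using True by simp
next
  case False
  have "(\<Sum>\<xi>\<in>{0..<int N}. ee N (\<xi> * m)) = (\<Sum>i<N. (ee N m)^i)"
    by (simp add: sum_int_range ee_pow)
  also have "\<dots> = 0"
    using ee_ne_1[OF assms False] ee_pow[of N N m] ee_mult_N[OF assms, of m]
    by (simp add: sum_gp_strict)
  finally show ?thesis using False by simp
qed

lemma fourier_ee: "fourier N f \<xi> = (1 / of_nat N) * (\<Sum>n\<in>{0..<int N}. of_real (f n) * ee N (- (\<xi> * n)))"
  unfolding fourier_def ee_def by (simp add: mult_ac)

lemma sum_shift_mod: assumes "N \<ge> 1"
  shows "(\<Sum>n\<in>{0..<int N}. h ((n - k) mod int N)) = (\<Sum>n\<in>{0..<int N}. h n)"
  by (rule sum.reindex_bij_witness[of _ "\<lambda>m. (m + k) mod int N" "\<lambda>n. (n - k) mod int N"])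
     (use assms in \<open>auto simp: mod_simps\<close>)

lemma L1: "(\<Sum>n\<in>A. (\<Sum>k\<in>B. c * a k n) * e n) = (c::complex) * (\<Sum>k\<in>B. \<Sum>n\<in>A. a k n * e n)"
proof -
  have "(\<Sum>n\<in>A. (\<Sum>k\<in>B. c * a k n) * e n) = (\<Sum>n\<in>A. \<Sum>k\<in>B. c * (a k n * e n))"
    by (simp add: sum_distrib_right mult.assoc)
  also have "\<dots> = (\<Sum>k\<in>B. \<Sum>n\<in>A. c * (a k n * e n))" by (rule sum.swap)
  also have "\<dots> = c * (\<Sum>k\<in>B. \<Sum>n\<in>A. a k n * e n)" by (simp add: sum_distrib_left)
  finally show ?thesis .
qed

lemma fourier_conv: assumes "N \<ge> 1"
  shows "fourier N (conv N f g) \<xi> = fourier N f \<xi> * fourier N g \<xi>"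
proof -
  let ?R = "{0..<int N}"
  let ?c = "1 / (of_nat N :: complex)"
  have step: "ee N (- (\<xi> * n)) = ee N (- (\<xi> * k)) * ee N (- (\<xi> * ((n - k) mod int N)))" for n k
  proof -
    have "ee N (- (\<xi> * ((n - k) mod int N))) = ee N (- (\<xi> * (n - k)))"
      by (rule ee_cong[OF assms]) (metis mod_minus_eq mod_mult_right_eq)
    moreover have "- (\<xi> * n) = - (\<xi> * k) + - (\<xi> * (n - k))" by (simp add: algebra_simps)
    ultimately show ?thesis by (metis ee_add)
  qed
  have c1: "complex_of_real (conv N f g n) = (\<Sum>k\<in>?R. ?c * (of_real (f k) * of_real (g ((n - k) mod int N))))" for n
    by (simp add: conv_def sum_distrib_left)
  have inner: "(\<Sum>n\<in>?R. (of_real (f k) * of_real (g ((n - k) mod int N))) * ee N (- (\<xi> * n)))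
     = (of_real (f k) * ee N (- (\<xi> * k))) * (\<Sum>n\<in>?R. of_real (g n) * ee N (- (\<xi> * n)))" for k
  proof -
    have "(\<Sum>n\<in>?R. (of_real (f k) * of_real (g ((n - k) mod int N))) * ee N (- (\<xi> * n)))
       = (\<Sum>n\<in>?R. (of_real (f k) * ee N (- (\<xi> * k))) * (of_real (g ((n - k) mod int N)) * ee N (- (\<xi> * ((n - k) mod int N)))))"
    proof (rule sum.cong[OF refl])
      fix n
      show "(of_real (f k) * of_real (g ((n - k) mod int N))) * ee N (- (\<xi> * n)) = (of_real (f k) * ee N (- (\<xi> * k))) * (of_real (g ((n - k) mod int N)) * ee N (- (\<xi> * ((n - k) mod int N))))"
        unfolding step[of n k] by (simp add: mult_ac)
    qed
    also have "\<dots> = (of_real (f k) * ee N (- (\<xi> * k))) * (\<Sum>n\<in>?R. of_real (g ((n - k) mod int N)) * ee N (- (\<xi> * ((n - k) mod int N))))"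
      by (simp add: sum_distrib_left)
    also have "\<dots> = (of_real (f k) * ee N (- (\<xi> * k))) * (\<Sum>n\<in>?R. of_real (g n) * ee N (- (\<xi> * n)))"
      using sum_shift_mod[OF assms, of "\<lambda>m. of_real (g m) * ee N (- (\<xi> * m))"] by simp
    finally show ?thesis .
  qed
  have "fourier N (conv N f g) \<xi> = ?c * (\<Sum>n\<in>?R. (\<Sum>k\<in>?R. ?c * (of_real (f k) * of_real (g ((n - k) mod int N)))) * ee N (- (\<xi> * n)))"
    unfolding fourier_ee c1 ..
  also have "\<dots> = ?c * (?c * (\<Sum>k\<in>?R. \<Sum>n\<in>?R. (of_real (f k) * of_real (g ((n - k) mod int N))) * ee N (- (\<xi> * n))))"
    by (simp only: L1)
  also have "\<dots> = ?c * (?c * (\<Sum>k\<in>?R. (of_real (f k) * ee N (- (\<xi> * k))) * (\<Sum>n\<in>?R. of_real (g n) * ee N (- (\<xi> * n)))))"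
    by (simp only: inner)
  also have "\<dots> = fourier N f \<xi> * fourier N g \<xi>"
    unfolding fourier_ee by (simp only: sum_distrib_right mult_ac)
  finally show ?thesis .
qed

lemma mod_diff_zero_iff: assumes "m \<in> {0..<int N}" "n \<in> {0..<int N}"
  shows "(m - n) mod int N = 0 \<longleftrightarrow> m = n"
proof -
  have "(m - n) mod int N = 0 \<longleftrightarrow> m mod int N = n mod int N"
    by (simp add: mod_eq_dvd_iff dvd_eq_mod_eq_0)
  also have "\<dots> \<longleftrightarrow> m = n" using assms by simp
  finally show ?thesis .
qed

lemma parseval: assumes "N \<ge> 1"
  shows "(\<Sum>\<xi>\<in>{0..<int N}. (norm (fourier N D \<xi>))^2) = (1 / real N) * (\<Sum>n\<in>{0..<int N}. (D n)^2)"
proof -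
  let ?R = "{0..<int N}"
  let ?c = "1 / (of_nat N :: complex)"
  let ?h = "\<lambda>n m. of_real (D n) * of_real (D m) :: complex"
  have cj: "cnj (fourier N D \<xi>) = ?c * (\<Sum>m\<in>?R. of_real (D m) * ee N (\<xi> * m))" for \<xi>
    unfolding fourier_ee by (simp add: ee_neg)
  have "complex_of_real (\<Sum>\<xi>\<in>?R. (norm (fourier N D \<xi>))^2) = (\<Sum>\<xi>\<in>?R. fourier N D \<xi> * cnj (fourier N D \<xi>))"
    unfolding of_real_sum by (simp only: complex_norm_square)
  also have "\<dots> = (\<Sum>\<xi>\<in>?R. ?c * ?c * (\<Sum>n\<in>?R. \<Sum>m\<in>?R. ?h n m * ee N (\<xi> * (m - n))))"
  proof (rule sum.cong[OF refl])
    fix \<xi>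
    have e: "ee N (- (\<xi> * n)) * ee N (\<xi> * m) = ee N (\<xi> * (m - n))" for n m
      by (metis ee_add add.commute diff_conv_add_uminus right_diff_distrib)
    have "fourier N D \<xi> * cnj (fourier N D \<xi>) = ?c * ?c * ((\<Sum>n\<in>?R. of_real (D n) * ee N (- (\<xi> * n))) * (\<Sum>m\<in>?R. of_real (D m) * ee N (\<xi> * m)))"
      unfolding cj unfolding fourier_ee by (simp only: mult_ac)
    also have "\<dots> = ?c * ?c * (\<Sum>n\<in>?R. \<Sum>m\<in>?R. (of_real (D n) * ee N (- (\<xi> * n))) * (of_real (D m) * ee N (\<xi> * m)))"
      by (simp only: sum_product)
    also have "\<dots> = ?c * ?c * (\<Sum>n\<in>?R. \<Sum>m\<in>?R. ?h n m * ee N (\<xi> * (m - n)))"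
      by (simp only: mult_ac e[symmetric])
    finally show "fourier N D \<xi> * cnj (fourier N D \<xi>) = ?c * ?c * (\<Sum>n\<in>?R. \<Sum>m\<in>?R. ?h n m * ee N (\<xi> * (m - n)))" .
  qed
  also have "\<dots> = ?c * ?c * (\<Sum>\<xi>\<in>?R. \<Sum>n\<in>?R. \<Sum>m\<in>?R. ?h n m * ee N (\<xi> * (m - n)))"
    by (simp only: sum_distrib_left)
  also have "\<dots> = ?c * ?c * (\<Sum>n\<in>?R. \<Sum>\<xi>\<in>?R. \<Sum>m\<in>?R. ?h n m * ee N (\<xi> * (m - n)))"
    by (subst sum.swap) (rule refl)
  also have "\<dots> = ?c * ?c * (\<Sum>n\<in>?R. \<Sum>m\<in>?R. \<Sum>\<xi>\<in>?R. ?h n m * ee N (\<xi> * (m - n)))"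
    by (rule arg_cong2[where f="(*)"], rule refl, rule sum.cong[OF refl], rule sum.swap)
  also have "\<dots> = ?c * ?c * (\<Sum>n\<in>?R. \<Sum>m\<in>?R. ?h n m * (\<Sum>\<xi>\<in>?R. ee N (\<xi> * (m - n))))"
    by (simp only: sum_distrib_left)
  also have "\<dots> = ?c * ?c * (\<Sum>n\<in>?R. \<Sum>m\<in>?R. if m = n then ?h n n * of_nat N else 0)"
    by (intro arg_cong2[where f="(*)"] refl sum.cong) (auto simp: orth[OF assms] mod_diff_zero_iff)
  also have "\<dots> = complex_of_real ((1 / real N) * (\<Sum>n\<in>?R. (D n)^2))"
    using assms by (simp add: sum.delta power2_eq_square sum_distrib_left)
  finally show ?thesis by (simp only: of_real_eq_iff)
qed

lemma fourier_lin: "fourier N (\<lambda>n. A n - B n / L) \<xi> = fourier N A \<xi> - fourier N B \<xi> / of_real L"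
  unfolding fourier_ee by (simp add: sum_subtractf sum_divide_distrib algebra_simps diff_divide_distrib)

lemma chi_hat_bound: assumes "\<forall>n. 0 \<le> chi n"
  shows "norm (of_real (norm1 N chi) - fourier N chi \<xi>) \<le> (1 / real N) * (\<Sum>n\<in>{0..<int N}. chi n * norm (1 - ee N (- (\<xi> * n))))"
proof -
  have "of_real (norm1 N chi) - fourier N chi \<xi> = (1 / of_nat N) * (\<Sum>n\<in>{0..<int N}. of_real (chi n) * (1 - ee N (- (\<xi> * n))))"
    unfolding norm1_def fourier_ee by (simp add: sum_subtractf algebra_simps)
  also have "norm \<dots> \<le> (1 / real N) * (\<Sum>n\<in>{0..<int N}. norm (of_real (chi n) * (1 - ee N (- (\<xi> * n)))))"
  proof -
    have "norm ((1 / of_nat N) * (\<Sum>n\<in>{0..<int N}. of_real (chi n) * (1 - ee N (- (\<xi> * n))))) =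
      (1 / real N) * norm (\<Sum>n\<in>{0..<int N}. of_real (chi n) * (1 - ee N (- (\<xi> * n))) :: complex)"
      by (simp add: norm_mult norm_divide)
    also have "\<dots> \<le> (1 / real N) * (\<Sum>n\<in>{0..<int N}. norm (of_real (chi n) * (1 - ee N (- (\<xi> * n))) :: complex))"
      by (rule mult_left_mono[OF norm_sum]) simp
    finally show ?thesis .
  qed
  also have "\<dots> = (1 / real N) * (\<Sum>n\<in>{0..<int N}. chi n * norm (1 - ee N (- (\<xi> * n))))"
    using assms by (simp add: norm_mult)
  finally show ?thesis .
qed

lemma norm_1_ee_le2: "norm (1 - ee N a) \<le> 2"
  using norm_triangle_ineq4[of 1 "ee N a"] by simp

lemma ee_dist: "norm (1 - ee N (- (\<xi> * n))) \<le> 2 * pi * dist_int (of_int \<xi> * of_int n / real N)"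
proof -
  define x where "x = of_int \<xi> * of_int n / real N"
  have "ee N (- (\<xi> * n)) = cis (- 2 * pi * x)" unfolding ee_def x_def by simp
  also have "\<dots> = cis (- 2 * pi * (x - of_int (round x))) * cis (2 * pi * of_int (- round x))"
    by (simp add: cis_mult algebra_simps)
  also have "cis (2 * pi * of_int (- round x)) = 1"
    by (rule cis_multiple_2pi) simp
  finally have "norm (1 - ee N (- (\<xi> * n))) = norm (1 - cis (- 2 * pi * (x - of_int (round x))))" by simp
  also have "\<dots> \<le> \<bar>- 2 * pi * (x - of_int (round x))\<bar>" by (rule norm_1_minus_cis)
  also have "\<dots> = 2 * pi * dist_int x" unfolding dist_int_def by (simp add: abs_mult)
  finally show ?thesis unfolding x_def .
qed

lemma card_spec: assumes "(\<Sum>\<xi>\<in>{0..<int N}. (F \<xi>::real) ^ 3) \<le> K" "\<forall>\<xi>. 0 \<le> F \<xi>" "\<tau> > 0"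
  shows "real (card {\<xi>\<in>{0..<int N}. \<tau> \<le> F \<xi>}) \<le> K / \<tau>^3"
proof -
  let ?S = "{\<xi>\<in>{0..<int N}. \<tau> \<le> F \<xi>}"
  have "real (card ?S) * \<tau>^3 = (\<Sum>\<xi>\<in>?S. \<tau>^3)" by simp
  also have "\<dots> \<le> (\<Sum>\<xi>\<in>?S. F \<xi> ^ 3)"
    by (rule sum_mono) (use assms in \<open>auto intro: power_mono\<close>)
  also have "\<dots> \<le> (\<Sum>\<xi>\<in>{0..<int N}. F \<xi> ^ 3)"
    by (rule sum_mono2) (use assms in auto)
  finally show ?thesis using assms by (simp add: field_simps)
qed

lemma conv_mod: "conv N f g (n mod int N) = conv N f g n"
  unfolding conv_def by (simp add: mod_simps)

lemma conv_nonneg: assumes "\<forall>n\<in>{0..<int N}. 0 \<le> f n" "\<forall>n. 0 \<le> g n"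
  shows "0 \<le> conv N f g n"
proof -
  have "0 \<le> (\<Sum>k\<in>{0..<int N}. f k * g ((n - k) mod int N))"
    by (rule sum_nonneg) (use assms in auto)
  then show ?thesis unfolding conv_def by simp
qed

lemma arithA: fixes a b w \<eta> \<tau> :: real
  assumes "0 \<le> a" "0 \<le> b" "0 \<le> w" "w \<le> 17 * \<eta>" "0 < \<tau>"
  shows "a^2 * b^2 * w^2 \<le> (289/2) * \<eta>^2 * (a^4 + b^4) + 2 * \<tau> * (a^3 + b^3)"
proof -
  have ab: "a^2 * b^2 \<le> (a^4 + b^4) / 2"
    using sum_squares_ge_zero[of "a^2 - b^2" 0] by (simp add: power2_eq_square algebra_simps power4_eq_xxxx)
  have w2: "w^2 \<le> 289 * \<eta>^2" using assms power_mono[of w "17*\<eta>" 2] by (simp add: power_mult_distrib)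
  have "a^2 * b^2 * w^2 \<le> (a^4 + b^4) / 2 * (289 * \<eta>^2)"
    by (rule mult_mono[OF ab w2]) simp_all
  also have "(a^4 + b^4) / 2 * (289 * \<eta>^2) = (289/2) * \<eta>^2 * (a^4 + b^4)" by (simp add: field_simps)
  finally have X: "a^2 * b^2 * w^2 \<le> (289/2) * \<eta>^2 * (a^4 + b^4)" .
  have "0 \<le> 2 * \<tau> * (a^3 + b^3)" using assms by simp
  with X show ?thesis by linarith
qed

lemma arithB: fixes a b w \<eta> \<tau> :: real
  assumes "0 \<le> a" "0 \<le> b" "0 \<le> w" "w \<le> 2" "a < \<tau>" "b < \<tau>"
  shows "a^2 * b^2 * w^2 \<le> (289/2) * \<eta>^2 * (a^4 + b^4) + 2 * \<tau> * (a^3 + b^3)"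
proof -
  have ab: "a^2 * b^2 \<le> (a^4 + b^4) / 2"
    using sum_squares_ge_zero[of "a^2 - b^2" 0] by (simp add: power2_eq_square algebra_simps power4_eq_xxxx)
  have w2: "w^2 \<le> 4" using assms power_mono[of w 2 2] by simp
  have "a^2 * b^2 * w^2 \<le> (a^4 + b^4) / 2 * 4"
    by (rule mult_mono[OF ab w2]) simp_all
  also have "a^4 \<le> \<tau> * a^3" using assms mult_right_mono[of a \<tau> "a^3"] by (simp add: power_Suc[symmetric] mult.commute)
  also have "b^4 \<le> \<tau> * b^3" using assms mult_right_mono[of b \<tau> "b^3"] by (simp add: power_Suc[symmetric] mult.commute)
  finally have "a^2 * b^2 * w^2 \<le> 2 * \<tau> * (a^3 + b^3)" by (simp add: algebra_simps)
  moreover have "0 \<le> (289/2) * \<eta>^2 * (a^4 + b^4)" by simp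
  ultimately show ?thesis by linarith
qed

lemma main:
  fixes f1 f2 chi :: "int \<Rightarrow> real" and \<Omega> :: "int set" and N :: nat
  assumes N: "N \<ge> 1"
   and fnn: "\<forall>n\<in>{0..<int N}. 0 \<le> f1 n \<and> 0 \<le> f2 n"
   and \<Omega>sub: "\<Omega> \<subseteq> {0..<int N}" and one: "1 mod int N \<in> \<Omega>"
   and chinn: "\<forall>n. 0 \<le> chi n"
   and nb: "\<forall>n. n mod int N \<notin> bohr N \<Omega> (2 * \<eta>) \<longrightarrow> chi n \<le> (\<eta>\<^sup>2 / 8) ^ card \<Omega>"
   and nl: "norm1 N chi \<ge> (\<eta> / 2) ^ card \<Omega>"
   and h1: "\<forall>t::int. real N / 3 < of_int t \<and> of_int t < 2 * real N / 3 \<longrightarrow> conv N f2 chi t \<ge> \<delta> * norm1 N chi"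
   and h2: "(\<Sum>n\<in>{n::int. real N / 3 < of_int n \<and> of_int n < real N / 2}. f1 n) \<ge> \<delta> * real N"
   and K13: "(\<Sum>\<xi>\<in>{0..<int N}. norm (fourier N f1 \<xi>) ^ 3) \<le> K0"
   and K14: "(\<Sum>\<xi>\<in>{0..<int N}. norm (fourier N f1 \<xi>) ^ 4) \<le> K0"
   and K23: "(\<Sum>\<xi>\<in>{0..<int N}. norm (fourier N f2 \<xi>) ^ 3) \<le> K0"
   and K24: "(\<Sum>\<xi>\<in>{0..<int N}. norm (fourier N f2 \<xi>) ^ 4) \<le> K0"
   and eta: "0 < \<eta>" "\<eta> \<le> 1/4" and tau: "0 < \<tau>" and dpos: "0 < \<delta>"
   and spec: "\<forall>\<xi>\<in>{0..<int N}. \<xi> \<notin> \<Omega> \<longrightarrow> norm (fourier N f1 \<xi>) < \<tau> \<and> norm (fourier N f2 \<xi>) < \<tau>"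
   and small: "289 * \<eta>^2 * K0 + 4 * \<tau> * K0 \<le> 4 * \<delta>^4 * \<epsilon> / 9"
  shows "real (card {n::int. 0.9 * real N \<le> of_int n \<and> n \<le> int N \<and> conv N f1 f2 n < \<delta>\<^sup>2 / 3}) \<le> \<epsilon> * real N"
proof -
  let ?R = "{0..<int N}"
  define k where "k = card \<Omega>"
  define L where "L = norm1 N chi"
  define q where "q = (\<eta>\<^sup>2 / 8) ^ k"
  have finO: "finite \<Omega>" using \<Omega>sub finite_subset by blast
  have k1: "k \<ge> 1" using finO one unfolding k_def by (metis One_nat_def Suc_leI card_gt_0_iff empty_iff)
  have Npos: "real N > 0" using N by simp
  have Lpos: "L > 0" using nl eta unfolding L_def k_def[symmetric] by (smt (verit) zero_less_divide_iff zero_less_power)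
  have e4: "(\<eta>/4)^k \<le> \<eta>/4"
  proof -
    have "(\<eta>/4)^k = (\<eta>/4) * (\<eta>/4)^(k-1)" using k1 by (metis Suc_diff_1 less_le_trans power_Suc zero_less_one)
    also have "\<dots> \<le> (\<eta>/4) * 1" using eta by (intro mult_left_mono power_le_one) auto
    finally show ?thesis by simp
  qed
  have qL: "2 * q \<le> L * \<eta> / 2"
  proof -
    have "q = (\<eta>/2)^k * (\<eta>/4)^k" unfolding q_def by (simp add: power_mult_distrib[symmetric] power2_eq_square)
    also have "\<dots> \<le> L * (\<eta>/4)" using nl e4 eta Lpos unfolding L_def k_def
      by (intro mult_mono) auto
    finally show ?thesis by simp
  qed
  have q0: "0 \<le> q" unfolding q_def by simp
  have Wgen: "norm (of_real L - fourier N chi \<xi>) \<le> 2 * L" for \<xi>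
  proof -
    have "norm (of_real L - fourier N chi \<xi>) \<le> (1 / real N) * (\<Sum>n\<in>?R. chi n * norm (1 - ee N (- (\<xi> * n))))"
      unfolding L_def by (rule chi_hat_bound[OF chinn])
    also have "\<dots> \<le> (1 / real N) * (\<Sum>n\<in>?R. 2 * chi n)"
    proof (intro mult_left_mono sum_mono)
      fix n
      have "chi n * norm (1 - ee N (- (\<xi> * n))) \<le> chi n * 2"
        by (rule mult_left_mono[OF norm_1_ee_le2]) (use chinn in auto)
      then show "chi n * norm (1 - ee N (- (\<xi> * n))) \<le> 2 * chi n" by simp
    qed simp
    also have "\<dots> = 2 * L" unfolding L_def norm1_def by (simp add: sum_distrib_left)
    finally show ?thesis .
  qed
  have WOm: "norm (of_real L - fourier N chi \<xi>) \<le> 17 * \<eta> * L" if "\<xi> \<in> \<Omega>" for \<xi>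
  proof -
    have pt: "chi n * norm (1 - ee N (- (\<xi> * n))) \<le> 4 * pi * \<eta> * chi n + 2 * q" if n: "n \<in> ?R" for n
    proof (cases "n \<in> bohr N \<Omega> (2 * \<eta>)")
      case True
      then have "dist_int (of_int \<xi> * of_int n / real N) \<le> 2 * \<eta>" using \<open>\<xi> \<in> \<Omega>\<close> unfolding bohr_def by auto
      then have "2 * pi * dist_int (of_int \<xi> * of_int n / real N) \<le> 2 * pi * (2 * \<eta>)" by (intro mult_left_mono) auto
      then have "norm (1 - ee N (- (\<xi> * n))) \<le> 4 * pi * \<eta>" using ee_dist[of N \<xi> n] by linarith
      then have "chi n * norm (1 - ee N (- (\<xi> * n))) \<le> chi n * (4 * pi * \<eta>)" using chinn by (simp add: mult_left_mono)
      then show ?thesis using q0 by (simp add: mult_ac)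
    next
      case False
      then have "chi n \<le> q" using nb n unfolding q_def k_def by auto
      moreover have "norm (1 - ee N (- (\<xi> * n))) \<le> 2" by (rule norm_1_ee_le2)
      ultimately have "chi n * norm (1 - ee N (- (\<xi> * n))) \<le> q * 2" using chinn q0 by (intro mult_mono) auto
      moreover have "0 \<le> 4 * pi * \<eta> * chi n" using chinn eta by simp
      ultimately show ?thesis by linarith
    qed
    have "norm (of_real L - fourier N chi \<xi>) \<le> (1 / real N) * (\<Sum>n\<in>?R. chi n * norm (1 - ee N (- (\<xi> * n))))"
      unfolding L_def by (rule chi_hat_bound[OF chinn])
    also have "\<dots> \<le> (1 / real N) * (\<Sum>n\<in>?R. 4 * pi * \<eta> * chi n + 2 * q)"
      by (intro mult_left_mono sum_mono pt) auto
    also have "\<dots> = 4 * pi * \<eta> * L + 2 * q" unfolding L_def norm1_def using Npos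
      by (simp add: sum.distrib sum_distrib_left field_simps)
    also have "\<dots> \<le> 4 * pi * \<eta> * L + L * \<eta> / 2" using qL by simp
    also have "\<dots> \<le> 17 * \<eta> * L" using pi_less_4 eta Lpos
    proof -
      have e: "17 * \<eta> * L - (4 * pi * \<eta> * L + L * \<eta> / 2) = 4 * ((\<eta> * L) * (4 - pi)) + (\<eta> * L) / 2"
        by (simp add: algebra_simps)
      have "0 \<le> (\<eta> * L) * (4 - pi)" using pi_less_4 eta Lpos by simp
      moreover have "0 \<le> \<eta> * L" using eta Lpos by simp
      ultimately show ?thesis using e by linarith
    qed
    finally show ?thesis .
  qed
  define G where "G = conv N f2 chi"
  define H where "H = conv N f1 G"
  define D where "D = (\<lambda>n. conv N f1 f2 n - H n / L)"
  have Dhat: "fourier N D \<xi> = fourier N f1 \<xi> * fourier N f2 \<xi> * ((of_real L - fourier N chi \<xi>) / of_real L)" for \<xi>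
    unfolding D_def fourier_lin H_def G_def fourier_conv[OF N] using Lpos by (simp add: field_simps)
  have ptD: "(norm (fourier N D \<xi>))^2 \<le> (289/2) * \<eta>^2 * (norm (fourier N f1 \<xi>)^4 + norm (fourier N f2 \<xi>)^4)
      + 2 * \<tau> * (norm (fourier N f1 \<xi>)^3 + norm (fourier N f2 \<xi>)^3)" if "\<xi> \<in> ?R" for \<xi>
  proof -
    define w where "w = norm (of_real L - fourier N chi \<xi>) / L"
    have "(norm (fourier N D \<xi>))^2 = (norm (fourier N f1 \<xi>))^2 * (norm (fourier N f2 \<xi>))^2 * w^2"
      unfolding Dhat w_def by (simp add: norm_mult norm_divide) (simp add: power_mult_distrib power_divide)
    also have "\<dots> \<le> (289/2) * \<eta>^2 * (norm (fourier N f1 \<xi>)^4 + norm (fourier N f2 \<xi>)^4)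
      + 2 * \<tau> * (norm (fourier N f1 \<xi>)^3 + norm (fourier N f2 \<xi>)^3)"
    proof (cases "\<xi> \<in> \<Omega>")
      case True
      have "w \<le> 17 * \<eta>" using WOm[OF True] Lpos unfolding w_def by (simp add: divide_le_eq)
      moreover have "0 \<le> w" using Lpos unfolding w_def by simp
      ultimately show ?thesis by (intro arithA[OF norm_ge_zero norm_ge_zero _ _ tau])
    next
      case False
      have "w \<le> 2" using Wgen[of \<xi>] Lpos unfolding w_def by (simp add: divide_le_eq)
      moreover have "0 \<le> w" using Lpos unfolding w_def by simp
      moreover have "norm (fourier N f1 \<xi>) < \<tau>" "norm (fourier N f2 \<xi>) < \<tau>" using spec that False by auto
      ultimately show ?thesis by (intro arithB[OF norm_ge_zero norm_ge_zero])
    qed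
    finally show ?thesis .
  qed
  have sumD: "(\<Sum>\<xi>\<in>?R. (norm (fourier N D \<xi>))^2) \<le> 4 * \<delta>^4 * \<epsilon> / 9"
  proof -
    have "(\<Sum>\<xi>\<in>?R. (norm (fourier N D \<xi>))^2) \<le> (\<Sum>\<xi>\<in>?R. (289/2) * \<eta>^2 * (norm (fourier N f1 \<xi>)^4 + norm (fourier N f2 \<xi>)^4)
      + 2 * \<tau> * (norm (fourier N f1 \<xi>)^3 + norm (fourier N f2 \<xi>)^3))"
      by (rule sum_mono) (rule ptD)
    also have "\<dots> = (289/2) * \<eta>^2 * ((\<Sum>\<xi>\<in>?R. norm (fourier N f1 \<xi>)^4) + (\<Sum>\<xi>\<in>?R. norm (fourier N f2 \<xi>)^4))
      + 2 * \<tau> * ((\<Sum>\<xi>\<in>?R. norm (fourier N f1 \<xi>)^3) + (\<Sum>\<xi>\<in>?R. norm (fourier N f2 \<xi>)^3))"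
      by (simp only: distrib_left sum.distrib sum_distrib_left)
    also have "\<dots> \<le> (289/2) * \<eta>^2 * (K0 + K0) + 2 * \<tau> * (K0 + K0)"
      using K13 K14 K23 K24 tau by (intro add_mono mult_left_mono) auto
    also have "\<dots> \<le> 4 * \<delta>^4 * \<epsilon> / 9" using small by (simp add: mult_ac)
    finally show ?thesis .
  qed
  have sumD2: "(\<Sum>n\<in>?R. (D n)^2) \<le> real N * (4 * \<delta>^4 * \<epsilon> / 9)"
    using sumD parseval[OF N, of D] Npos by (simp add: field_simps)
  define B where "B = {n::int. 0.9 * real N \<le> of_int n \<and> n \<le> int N \<and> conv N f1 f2 n < \<delta>\<^sup>2 / 3}"
  have Gnn: "0 \<le> G m" for m unfolding G_def using fnn chinn by (intro conv_nonneg) auto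
  have Hlow: "H n \<ge> \<delta>^2 * L" if "n \<in> B" for n
  proof -
    define A where "A = {n::int. real N / 3 < of_int n \<and> of_int n < real N / 2}"
    have AR: "A \<subseteq> ?R" unfolding A_def by auto
    have nB: "0.9 * real N \<le> of_int n" "n \<le> int N" using that unfolding B_def by auto
    have Gk: "G ((n - k) mod int N) \<ge> \<delta> * L" if "k \<in> A" for k
    proof -
      have k: "real N / 3 < of_int k" "of_int k < real N / 2" using that unfolding A_def by auto
      have "0 \<le> n - k" "n - k < int N" using k nB by linarith+
      then have "(n - k) mod int N = n - k" by simp
      moreover have "real N / 3 < of_int (n - k)" "of_int (n - k) < 2 * real N / 3" using k nB by auto
      ultimately show ?thesis using h1 unfolding G_def L_def by auto
    qed
    have "\<delta> * L * (\<delta> * real N) \<le> \<delta> * L * (\<Sum>k\<in>A. f1 k)"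
      using h2 dpos Lpos unfolding A_def by (intro mult_left_mono) auto
    also have "\<dots> = (\<Sum>k\<in>A. f1 k * (\<delta> * L))" by (simp add: sum_distrib_left mult_ac)
    also have "\<dots> \<le> (\<Sum>k\<in>A. f1 k * G ((n - k) mod int N))"
      by (rule sum_mono) (use Gk fnn AR in \<open>auto intro: mult_left_mono\<close>)
    also have "\<dots> \<le> (\<Sum>k\<in>?R. f1 k * G ((n - k) mod int N))"
      by (rule sum_mono2) (use AR fnn Gnn in auto)
    finally have "\<delta> * L * (\<delta> * real N) \<le> (\<Sum>k\<in>?R. f1 k * G ((n - k) mod int N))" .
    then show ?thesis unfolding H_def conv_def using Npos by (simp add: field_simps power2_eq_square)
  qed
  have Dbad: "(D n)^2 \<ge> 4 * \<delta>^4 / 9" if "n \<in> B" for n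
  proof -
    have "conv N f1 f2 n < \<delta>^2 / 3" using that unfolding B_def by auto
    moreover have "H n / L \<ge> \<delta>^2" using Hlow[OF that] Lpos by (simp add: field_simps)
    ultimately have "- D n \<ge> 2 * \<delta>^2 / 3" unfolding D_def by linarith
    moreover have "0 \<le> 2 * \<delta>^2 / 3" by simp
    ultimately have "(2 * \<delta>^2 / 3)^2 \<le> (- D n)^2" by (rule power_mono)
    then show ?thesis by (simp add: power2_eq_square power4_eq_xxxx)
  qed
  have Dmod: "D (n mod int N) = D n" for n unfolding D_def H_def by (simp add: conv_mod)
  have inj: "inj_on (\<lambda>n. n mod int N) B"
  proof (rule inj_onI)
    fix x y assume x: "x \<in> B" and y: "y \<in> B" and e: "x mod int N = y mod int N"
    have bx: "0 < x" "x \<le> int N"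
    proof -
      have "0.9 * real N \<le> of_int x" "x \<le> int N" using x unfolding B_def by auto
      moreover from this have "0 < real_of_int x" using Npos by linarith
      ultimately show "0 < x" "x \<le> int N" by simp_all
    qed
    have by': "0 < y" "y \<le> int N"
    proof -
      have "0.9 * real N \<le> of_int y" "y \<le> int N" using y unfolding B_def by auto
      moreover from this have "0 < real_of_int y" using Npos by linarith
      ultimately show "0 < y" "y \<le> int N" by simp_all
    qed
    have "int N dvd x - y" using e by (simp add: mod_eq_dvd_iff)
    moreover have "\<bar>x - y\<bar> < int N" using bx by' by (simp add: abs_less_iff)
    ultimately show "x = y" using dvd_imp_le_int[of "x - y" "int N"] by (cases "x - y = 0") auto
  qed
  have imgR: "(\<lambda>n. n mod int N) ` B \<subseteq> ?R" using N by auto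
  have "real (card B) * (4 * \<delta>^4 / 9) = real (card ((\<lambda>n. n mod int N) ` B)) * (4 * \<delta>^4 / 9)"
    using card_image[OF inj] by simp
  also have "\<dots> \<le> (\<Sum>r\<in>(\<lambda>n. n mod int N) ` B. (D r)^2)"
  proof (rule sum_bounded_below)
    fix r assume "r \<in> (\<lambda>n. n mod int N) ` B"
    then obtain n where n: "n \<in> B" "r = n mod int N" by auto
    show "4 * \<delta>^4 / 9 \<le> (D r)^2" using Dbad[OF n(1)] unfolding n(2) Dmod .
  qed
  also have "\<dots> \<le> (\<Sum>n\<in>?R. (D n)^2)"
    by (rule sum_mono2) (use imgR in auto)
  also have "\<dots> \<le> real N * (4 * \<delta>^4 * \<epsilon> / 9)" by (rule sumD2)
  finally have "real (card B) * (4 * \<delta>^4 / 9) \<le> (\<epsilon> * real N) * (4 * \<delta>^4 / 9)" by (simp add: field_simps)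
  then have "real (card B) \<le> \<epsilon> * real N" using dpos by (simp add: mult_le_cancel_right)
  then show ?thesis unfolding B_def .
qed

theorem proposition1:
  fixes c :: "nat \<Rightarrow> real" and K0 \<delta> \<epsilon> :: real
  assumes "K0 \<ge> 1" and "\<delta> > 0" and "\<epsilon> > 0"
  shows "\<exists>M::nat. \<exists>\<eta>::real. 0 < \<eta> \<and> \<eta> < 1/2 \<and>
    (\<forall>(N::nat) (f1::int \<Rightarrow> real) (f2::int \<Rightarrow> real).
      N \<ge> 1 \<longrightarrow> (\<forall>n\<in>{0..<int N}. 0 \<le> f1 n \<and> 0 \<le> f2 n) \<longrightarrow>
      (\<exists>\<Omega>. \<Omega> \<subseteq> {0..<int N} \<and> 1 mod int N \<in> \<Omega> \<and> card \<Omega> \<le> M \<and>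
        (\<forall>chi::int \<Rightarrow> real.
          (\<forall>n. 0 \<le> chi n \<and> chi n \<le> c (card \<Omega>)) \<longrightarrow>
          (\<forall>n. chi n = chi (- n)) \<longrightarrow>
          (\<forall>n. chi (n + int N) = chi n) \<longrightarrow>
          (\<forall>n. n mod int N \<in> bohr N \<Omega> \<eta> \<longrightarrow> chi n \<ge> 1) \<longrightarrow>
          (\<forall>n. n mod int N \<notin> bohr N \<Omega> (2 * \<eta>) \<longrightarrow> chi n \<le> (\<eta>\<^sup>2 / 8) ^ card \<Omega>) \<longrightarrow>
          norm1 N chi \<ge> (\<eta> / 2) ^ card \<Omega> \<longrightarrow>
          (\<forall>t::int. real N / 3 < of_int t \<and> of_int t < 2 * real N / 3 \<longrightarrow>
              conv N f2 chi t \<ge> \<delta> * norm1 N chi) \<longrightarrow>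
          (\<Sum>n\<in>{n::int. real N / 3 < of_int n \<and> of_int n < real N / 2}. f1 n) \<ge> \<delta> * real N \<longrightarrow>
          (\<forall>f\<in>{f1, f2}. \<forall>r\<in>{3::nat, 4}.
              (\<Sum>\<xi>\<in>{0..<int N}. norm (fourier N f \<xi>) ^ r) \<le> K0) \<longrightarrow>
          real (card {n::int. 0.9 * real N \<le> of_int n \<and> n \<le> int N \<and>
                          conv N f1 f2 n < \<delta>\<^sup>2 / 3}) \<le> \<epsilon> * real N)))"
  proof -
  have K0: "K0 \<ge> 1" and dpos: "\<delta> > 0" and epos: "\<epsilon> > 0" using assms by auto
  define \<tau> where "\<tau> = \<delta>^4 * \<epsilon> / (18 * K0)"
  define m where "m = min 1 \<epsilon>"
  define \<eta> where "\<eta> = min (1/4) (\<delta>^2 * m / (40 * K0))"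
  define M where "M = nat \<lceil>2 * K0 / \<tau>^3\<rceil> + 1"
  have tau: "\<tau> > 0" unfolding \<tau>_def using K0 dpos epos by simp
  have mpos: "m > 0" "m \<le> 1" "m \<le> \<epsilon>" unfolding m_def using epos by auto
  have eta: "0 < \<eta>" "\<eta> \<le> 1/4" unfolding \<eta>_def using K0 dpos mpos by auto
  have small: "289 * \<eta>^2 * K0 + 4 * \<tau> * K0 \<le> 4 * \<delta>^4 * \<epsilon> / 9"
  proof -
    have e1: "\<eta> \<le> \<delta>^2 * m / (40 * K0)" unfolding \<eta>_def by simp
    have "\<eta>^2 \<le> (\<delta>^2 * m / (40 * K0))^2" using e1 eta by (intro power_mono) auto
    also have "\<dots> = \<delta>^4 * m^2 / (1600 * K0^2)" by (simp add: power_mult_distrib power_divide power2_eq_square power4_eq_xxxx)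
    finally have e2: "\<eta>^2 * K0 \<le> \<delta>^4 * m^2 / (1600 * K0^2) * K0" using K0 by (intro mult_right_mono) auto
    also have "\<dots> = \<delta>^4 * m^2 / (1600 * K0)" using K0 by (simp add: power2_eq_square field_simps)
    also have "\<dots> \<le> \<delta>^4 * m^2 / 1600" using K0 dpos by (intro divide_left_mono) auto
    also have "\<dots> \<le> \<delta>^4 * \<epsilon> / 1600"
    proof -
      have "m^2 \<le> \<epsilon>" using mpos by (smt (verit) mult_left_le_one_le power2_eq_square)
      then show ?thesis using dpos by (intro divide_right_mono mult_left_mono) auto
    qed
    finally have "\<eta>^2 * K0 \<le> \<delta>^4 * \<epsilon> / 1600" .
    moreover have "4 * \<tau> * K0 = 2 * \<delta>^4 * \<epsilon> / 9" unfolding \<tau>_def using K0 by simp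
    moreover have "0 \<le> \<delta>^4 * \<epsilon>" using dpos epos by simp
    ultimately show ?thesis by (simp add: mult_ac)
  qed
  show ?thesis
  proof (rule exI[of _ M], rule exI[of _ \<eta>], intro conjI allI impI)
    show "0 < \<eta>" "\<eta> < 1/2" using eta by auto
    fix N :: nat and f1 f2 :: "int \<Rightarrow> real"
    assume N: "N \<ge> 1" and fnn: "\<forall>n\<in>{0..<int N}. 0 \<le> f1 n \<and> 0 \<le> f2 n"
    let ?R = "{0..<int N}"
    define P where "P = (\<forall>f\<in>{f1, f2}. \<forall>r\<in>{3::nat, 4}. (\<Sum>\<xi>\<in>?R. norm (fourier N f \<xi>) ^ r) \<le> K0)"
    define S1 where "S1 = {\<xi>\<in>?R. \<tau> \<le> norm (fourier N f1 \<xi>)}"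
    define S2 where "S2 = {\<xi>\<in>?R. \<tau> \<le> norm (fourier N f2 \<xi>)}"
    define \<Omega> where "\<Omega> = (if P then S1 \<union> S2 \<union> {1 mod int N} else {1 mod int N})"
    have oneR: "1 mod int N \<in> ?R" using N by auto
    have sub: "\<Omega> \<subseteq> ?R" unfolding \<Omega>_def S1_def S2_def using oneR by auto
    have one: "1 mod int N \<in> \<Omega>" unfolding \<Omega>_def by auto
    have cardM: "card \<Omega> \<le> M"
    proof (cases P)
      case True
      have c1: "real (card S1) \<le> K0 / \<tau>^3" unfolding S1_def
        by (rule card_spec) (use True tau in \<open>auto simp: P_def\<close>)
      have c2: "real (card S2) \<le> K0 / \<tau>^3" unfolding S2_def
        by (rule card_spec) (use True tau in \<open>auto simp: P_def\<close>)
      have "card \<Omega> \<le> card (S1 \<union> S2) + card {1 mod int N}"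
      proof -
        have "\<Omega> = (S1 \<union> S2) \<union> {1 mod int N}" using True unfolding \<Omega>_def by simp
        then show ?thesis by (simp only: card_Un_le)
      qed
      also have "\<dots> \<le> card S1 + card S2 + 1" using card_Un_le[of S1 S2] by simp
      finally have "real (card \<Omega>) \<le> real (card S1) + real (card S2) + 1" by linarith
      also have "\<dots> \<le> 2 * K0 / \<tau>^3 + 1" using c1 c2 by simp
      also have "\<dots> \<le> real (nat \<lceil>2 * K0 / \<tau>^3\<rceil>) + 1" by linarith
      finally show ?thesis unfolding M_def by linarith
    next
      case False
      then show ?thesis unfolding \<Omega>_def M_def by simp
    qed
    show "\<exists>\<Omega>. \<Omega> \<subseteq> {0..<int N} \<and> 1 mod int N \<in> \<Omega> \<and> card \<Omega> \<le> M \<and>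
        (\<forall>chi::int \<Rightarrow> real.
          (\<forall>n. 0 \<le> chi n \<and> chi n \<le> c (card \<Omega>)) \<longrightarrow>
          (\<forall>n. chi n = chi (- n)) \<longrightarrow>
          (\<forall>n. chi (n + int N) = chi n) \<longrightarrow>
          (\<forall>n. n mod int N \<in> bohr N \<Omega> \<eta> \<longrightarrow> chi n \<ge> 1) \<longrightarrow>
          (\<forall>n. n mod int N \<notin> bohr N \<Omega> (2 * \<eta>) \<longrightarrow> chi n \<le> (\<eta>\<^sup>2 / 8) ^ card \<Omega>) \<longrightarrow>
          norm1 N chi \<ge> (\<eta> / 2) ^ card \<Omega> \<longrightarrow>
          (\<forall>t::int. real N / 3 < of_int t \<and> of_int t < 2 * real N / 3 \<longrightarrow>
              conv N f2 chi t \<ge> \<delta> * norm1 N chi) \<longrightarrow>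
          (\<Sum>n\<in>{n::int. real N / 3 < of_int n \<and> of_int n < real N / 2}. f1 n) \<ge> \<delta> * real N \<longrightarrow>
          (\<forall>f\<in>{f1, f2}. \<forall>r\<in>{3::nat, 4}.
              (\<Sum>\<xi>\<in>{0..<int N}. norm (fourier N f \<xi>) ^ r) \<le> K0) \<longrightarrow>
          real (card {n::int. 0.9 * real N \<le> of_int n \<and> n \<le> int N \<and>
                          conv N f1 f2 n < \<delta>\<^sup>2 / 3}) \<le> \<epsilon> * real N)"
    proof (rule exI[of _ \<Omega>], intro conjI allI impI)
      show "\<Omega> \<subseteq> {0..<int N}" "1 mod int N \<in> \<Omega>" "card \<Omega> \<le> M" using sub one cardM by auto
      fix chi :: "int \<Rightarrow> real"
      assume h0: "\<forall>n. 0 \<le> chi n \<and> chi n \<le> c (card \<Omega>)"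
        and "\<forall>n. chi n = chi (- n)" and "\<forall>n. chi (n + int N) = chi n"
        and "\<forall>n. n mod int N \<in> bohr N \<Omega> \<eta> \<longrightarrow> chi n \<ge> 1"
        and nb: "\<forall>n. n mod int N \<notin> bohr N \<Omega> (2 * \<eta>) \<longrightarrow> chi n \<le> (\<eta>\<^sup>2 / 8) ^ card \<Omega>"
        and nl: "norm1 N chi \<ge> (\<eta> / 2) ^ card \<Omega>"
        and h1: "\<forall>t::int. real N / 3 < of_int t \<and> of_int t < 2 * real N / 3 \<longrightarrow> conv N f2 chi t \<ge> \<delta> * norm1 N chi"
        and h2: "(\<Sum>n\<in>{n::int. real N / 3 < of_int n \<and> of_int n < real N / 2}. f1 n) \<ge> \<delta> * real N"
        and hK: "\<forall>f\<in>{f1, f2}. \<forall>r\<in>{3::nat, 4}. (\<Sum>\<xi>\<in>{0..<int N}. norm (fourier N f \<xi>) ^ r) \<le> K0"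
      have P: P unfolding P_def using hK .
      have spec: "\<forall>\<xi>\<in>?R. \<xi> \<notin> \<Omega> \<longrightarrow> norm (fourier N f1 \<xi>) < \<tau> \<and> norm (fourier N f2 \<xi>) < \<tau>"
        unfolding \<Omega>_def S1_def S2_def using P by auto
      show "real (card {n::int. 0.9 * real N \<le> of_int n \<and> n \<le> int N \<and> conv N f1 f2 n < \<delta>\<^sup>2 / 3}) \<le> \<epsilon> * real N"
        by (rule main[OF N fnn sub one _ nb nl h1 h2 _ _ _ _ eta tau dpos spec small])
           (use h0 hK in auto)
    qed
  qed
qed

end
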